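(* Let $k\ge1$ and let $g_1,\dots,g_n$ be the columns of $G_k^\beta$. If $g_i=\lambda g_j$ for some $i,j\in\{1,\dots,n\}$ and $\lambda\in R$, then $\lambda=1$ and $i=j$.
   Context: Let $R$ be a finite commutative chain ring with maximal ideal $\langle\gamma\rangle$, nilpotency index $s$ and residue field $R/\langle\gamma\rangle\cong\mathbb{F}_q$. Fix coset representatives $T=\{e_0,\dots,e_{q-1}\}$ with $e_0=0,e_1=1$, ordered $e_0<\dots<e_{q-1}$; each $r\in R$ is uniquely $\sum_{i=0}^{s-1}r_i\gamma^i$, $r_i\in T$; order $R$ by $x>y$ iff $x_i>y_i$ in $T$ for the largest $i$ with $x_i\neq y_i$; list $R=\{\rho_0,\dots,\rho_{q^s-1}\}$ increasingly. $\mathbf{a}^{(m)}$ is the constant vector of length $m$. Define $G_1^\alpha=(\rho_0\ \cdots\ \rho_{q^s-1})$ and, for $k>1$, $G_k^\alpha$ as the matrix of $q^s$ column blocks, the $j$-th having first row $\boldsymbol{\rho_j}^{(q^{s(k-1)})}$ and $G_{k-1}^\alpha$ below. List $\langle\gamma\rangle$ increasingly as $a_0\gamma<\dots<a_{q^{s-1}-1}\gamma$ ($a_0\gamma=0$). Define $G_1^\beta=(1)$ and, for $k>1$, $G_k^\beta$ as the matrix with column blocks: first a block with first row $\mathbf{1}^{(q^{s(k-1)})}$ and $G_{k-1}^\alpha$ below; then for each $j=0,\dots,q^{s-1}-1$ a block with first row the constant vector with entry $a_j\gamma$ and $G_{k-1}^\beta$ below. *)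

theory Defs
  imports Main
begin

definition is_ideal :: "'a::comm_ring_1 set \<Rightarrow> bool" where
  "is_ideal I \<longleftrightarrow> 0 \<in> I \<and> (\<forall>x\<in>I. \<forall>y\<in>I. x + y \<in> I) \<and> (\<forall>r. \<forall>x\<in>I. r * x \<in> I)"

definition pideal :: "'a::comm_ring_1 \<Rightarrow> 'a set" where
  "pideal g = {g * r | r. True}"

text \<open>Standing setup: the finite ring 'a is a commutative chain ring (ideals totally
 ordered by inclusion) with maximal ideal generated by gam, nilpotency index s,
 residue field of size q, and the list e = [e_0,...,e_(q-1)] of coset
 representatives of the maximal ideal with e_0 = 0, e_1 = 1, ordered by list position.\<close>
definition chain_ring_data :: "'a::{comm_ring_1,finite} \<Rightarrow> nat \<Rightarrow> nat \<Rightarrow> 'a list \<Rightarrow> bool" where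
  "chain_ring_data gam s q e \<longleftrightarrow>
     (0::'a) \<noteq> 1 \<and>
     (\<forall>I J :: 'a set. is_ideal I \<longrightarrow> is_ideal J \<longrightarrow> I \<subseteq> J \<or> J \<subseteq> I) \<and>
     pideal gam \<noteq> UNIV \<and>
     (\<forall>J. is_ideal J \<and> pideal gam \<subseteq> J \<longrightarrow> J = pideal gam \<or> J = UNIV) \<and>
     gam ^ s = 0 \<and> (\<forall>t<s. gam ^ t \<noteq> 0) \<and>
     q = card ((\<lambda>x. {x + y | y. y \<in> pideal gam}) ` (UNIV :: 'a set)) \<and>
     length e = q \<and> e ! 0 = 0 \<and> e ! 1 = 1 \<and>
     (\<forall>x. \<exists>!i. i < q \<and> x - e ! i \<in> pideal gam)"

text \<open>The digits (indices into e) of the gamma-adic expansion r = sum r_i gam^i, r_i in T.\<close>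
definition digits :: "'a::comm_ring_1 \<Rightarrow> nat \<Rightarrow> nat \<Rightarrow> 'a list \<Rightarrow> 'a \<Rightarrow> nat list" where
  "digits gam s q e r = (THE ds. length ds = s \<and> (\<forall>i<s. ds ! i < q) \<and>
       r = (\<Sum>i<s. e ! (ds ! i) * gam ^ i))"

definition cr_less :: "'a::comm_ring_1 \<Rightarrow> nat \<Rightarrow> nat \<Rightarrow> 'a list \<Rightarrow> 'a \<Rightarrow> 'a \<Rightarrow> bool" where
  "cr_less gam s q e x y \<longleftrightarrow>
     (\<exists>i<s. digits gam s q e x ! i < digits gam s q e y ! i \<and>
        (\<forall>l. i < l \<and> l < s \<longrightarrow> digits gam s q e x ! l = digits gam s q e y ! l))"

text \<open>rho j: the j-th element (0-indexed) of R listed increasingly.\<close>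
definition rho :: "'a::comm_ring_1 \<Rightarrow> nat \<Rightarrow> nat \<Rightarrow> 'a list \<Rightarrow> nat \<Rightarrow> 'a" where
  "rho gam s q e j = (THE r. card {x. cr_less gam s q e x r} = j)"

text \<open>agam j = a_j gamma: the j-th element (0-indexed) of the ideal (gamma) listed increasingly.\<close>
definition agam :: "'a::comm_ring_1 \<Rightarrow> nat \<Rightarrow> nat \<Rightarrow> 'a list \<Rightarrow> nat \<Rightarrow> 'a" where
  "agam gam s q e j = (THE r. r \<in> pideal gam \<and>
       card {x \<in> pideal gam. cr_less gam s q e x r} = j)"

text \<open>Column c (0-indexed) of G_k^alpha, as a list of length k (top entry first).
  G_k^alpha has q^(s k) columns; block j of G_(k+1)^alpha has q^(s k) columns.\<close>
fun col_alpha :: "'a::comm_ring_1 \<Rightarrow> nat \<Rightarrow> nat \<Rightarrow> 'a list \<Rightarrow> nat \<Rightarrow> nat \<Rightarrow> 'a list" where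
  "col_alpha gam s q e 0 c = []"
| "col_alpha gam s q e (Suc k) c =
     rho gam s q e (c div q ^ (s * k)) # col_alpha gam s q e k (c mod q ^ (s * k))"

text \<open>Number of columns of G_k^beta (k \<ge> 1).\<close>
fun n_beta :: "nat \<Rightarrow> nat \<Rightarrow> nat \<Rightarrow> nat" where
  "n_beta q s 0 = 0"
| "n_beta q s (Suc 0) = 1"
| "n_beta q s (Suc (Suc k)) = q ^ (s * Suc k) + q ^ (s - 1) * n_beta q s (Suc k)"

text \<open>Column c (0-indexed) of G_k^beta, as a list of length k.\<close>
fun col_beta :: "'a::comm_ring_1 \<Rightarrow> nat \<Rightarrow> nat \<Rightarrow> 'a list \<Rightarrow> nat \<Rightarrow> nat \<Rightarrow> 'a list" where
  "col_beta gam s q e 0 c = []"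
| "col_beta gam s q e (Suc 0) c = [1]"
| "col_beta gam s q e (Suc (Suc k)) c =
     (if c < q ^ (s * Suc k) then 1 # col_alpha gam s q e (Suc k) c
      else (let c' = c - q ^ (s * Suc k) in
            agam gam s q e (c' div n_beta q s (Suc k)) # col_beta gam s q e (Suc k) (c' mod n_beta q s (Suc k))))"

end

theory Submission
  imports Defs
begin

fun val :: "'a::comm_ring_1 \<Rightarrow> 'a list \<Rightarrow> nat list \<Rightarrow> 'a" where
  "val g e [] = 0"
| "val g e (d # ds) = e ! d + g * val g e ds"

lemma val_sum: "val g e ds = (\<Sum>i<length ds. e ! (ds ! i) * g ^ i)"
proof (induction ds)
  case Nil then show ?case by simp
next
  case (Cons d ds)
  have "(\<Sum>i<length (d # ds). e ! ((d # ds) ! i) * g ^ i)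
      = e ! d + (\<Sum>i<length ds. e ! (ds ! i) * g ^ Suc i)"
    by (simp only: length_Cons sum.lessThan_Suc_shift) simp
  also have "\<dots> = e ! d + g * (\<Sum>i<length ds. e ! (ds ! i) * g ^ i)"
    by (simp add: sum_distrib_left algebra_simps)
  finally show ?case using Cons by simp
qed

lemma set_lt_conv: "set ds \<subseteq> {..<q} \<longleftrightarrow> (\<forall>i<length ds. ds ! i < (q::nat))"
  unfolding subset_iff in_set_conv_nth lessThan_iff by blast

definition lexlt :: "nat \<Rightarrow> nat list \<Rightarrow> nat list \<Rightarrow> bool" where
  "lexlt s a b \<longleftrightarrow> (\<exists>i<s. a!i < b!i \<and> (\<forall>l. i<l \<and> l<s \<longrightarrow> a!l = b!l))"

lemma lexlt_irrefl: "\<not> lexlt s a a" by (auto simp: lexlt_def)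

lemma lexlt_trans:
  assumes "lexlt s a b" "lexlt s b c" shows "lexlt s a c"
proof -
  obtain i where i: "i<s" "a!i<b!i" "\<forall>l. i<l \<and> l<s \<longrightarrow> a!l = b!l"
    using assms(1) unfolding lexlt_def by blast
  obtain i' where i': "i'<s" "b!i'<c!i'" "\<forall>l. i'<l \<and> l<s \<longrightarrow> b!l = c!l"
    using assms(2) unfolding lexlt_def by blast
  show ?thesis unfolding lexlt_def
  proof (cases i i' rule: linorder_cases)
    case less
    then show "\<exists>i<s. a!i < c!i \<and> (\<forall>l. i<l \<and> l<s \<longrightarrow> a!l = c!l)"
      using i i' by (intro exI[of _ i']) auto
  next
    case equal
    then show "\<exists>i<s. a!i < c!i \<and> (\<forall>l. i<l \<and> l<s \<longrightarrow> a!l = c!l)"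
      using i i' by (intro exI[of _ i']) auto
  next
    case greater
    then show "\<exists>i<s. a!i < c!i \<and> (\<forall>l. i<l \<and> l<s \<longrightarrow> a!l = c!l)"
      using i i' by (intro exI[of _ i]) auto
  qed
qed

lemma lexlt_total:
  assumes la: "length a = s" and lb: "length b = s" and ne: "a \<noteq> b"
  shows "lexlt s a b \<or> lexlt s b a"
proof -
  define D where "D = {i. i < s \<and> a!i \<noteq> b!i}"
  have Dne: "D \<noteq> {}"
  proof
    assume "D = {}"
    then have "\<forall>i<s. a!i = b!i" unfolding D_def by auto
    then have "a = b" using la lb by (intro nth_equalityI) auto
    then show False using ne by simp
  qed
  have fin: "finite D" unfolding D_def by auto
  define m where "m = Max D"
  have m: "m \<in> D" unfolding m_def using Max_in fin Dne by blast
  have above: "\<forall>l. m < l \<and> l < s \<longrightarrow> a!l = b!l"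
  proof (intro allI impI)
    fix l assume l: "m < l \<and> l < s"
    show "a!l = b!l"
    proof (rule ccontr)
      assume "a!l \<noteq> b!l"
      then have "l \<in> D" using l unfolding D_def by auto
      then have "l \<le> m" unfolding m_def using fin by auto
      then show False using l by simp
    qed
  qed
  have "m < s" "a!m \<noteq> b!m" using m unfolding D_def by auto
  then show ?thesis unfolding lexlt_def using above
    by (metis linorder_neqE_nat)
qed

lemma rank_unique:
  fixes S :: "'a set" and lt :: "'a \<Rightarrow> 'a \<Rightarrow> bool"
  assumes fin: "finite S"
    and irr: "\<And>x. \<not> lt x x"
    and tr: "\<And>x y z. lt x y \<Longrightarrow> lt y z \<Longrightarrow> lt x z"
    and tot: "\<And>x y. x \<in> S \<Longrightarrow> y \<in> S \<Longrightarrow> x \<noteq> y \<Longrightarrow> lt x y \<or> lt y x"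
    and j: "j < card S"
  shows "\<exists>!r. r \<in> S \<and> card {x\<in>S. lt x r} = j"
proof -
  define rk where "rk = (\<lambda>r. card {x\<in>S. lt x r})"
  have mono: "rk r < rk r'" if "lt r r'" "r \<in> S" for r r'
  proof -
    have "{x\<in>S. lt x r} \<subset> {x\<in>S. lt x r'}" using that tr irr by blast
    then show ?thesis unfolding rk_def using fin by (intro psubset_card_mono) auto
  qed
  have inj: "inj_on rk S"
  proof (rule inj_onI)
    fix x y assume xy: "x \<in> S" "y \<in> S" "rk x = rk y"
    show "x = y"
    proof (rule ccontr)
      assume "x \<noteq> y"
      then have "lt x y \<or> lt y x" using tot xy by blast
      then show False using mono xy by (metis less_irrefl)
    qed
  qed
  have sub: "rk ` S \<subseteq> {..<card S}"
  proof
    fix n assume "n \<in> rk ` S"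
    then obtain r where r: "r \<in> S" "n = rk r" by auto
    have "{x\<in>S. lt x r} \<subset> S" using r irr by auto
    then have "rk r < card S" unfolding rk_def using fin psubset_card_mono by blast
    then show "n \<in> {..<card S}" using r by simp
  qed
  have eq: "rk ` S = {..<card S}"
    using card_image[OF inj] fin sub by (intro card_subset_eq) auto
  then obtain r where r: "r \<in> S" "rk r = j" using j
    by (metis imageE lessThan_iff)
  show ?thesis
  proof (rule ex1I[of _ r])
    show "r \<in> S \<and> card {x\<in>S. lt x r} = j" using r unfolding rk_def by simp
  next
    fix y assume "y \<in> S \<and> card {x\<in>S. lt x y} = j"
    then show "y = r" using r inj unfolding rk_def inj_on_def by metis
  qed
qed

context
  fixes gam :: "'a::{comm_ring_1,finite}" and s q :: nat and e :: "'a list"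
  assumes crd: "chain_ring_data gam s q e"
begin

lemma M_mem: "x \<in> pideal gam \<longleftrightarrow> (\<exists>r. x = gam * r)"
  by (auto simp: pideal_def)

lemma M_mult: "x \<in> pideal gam \<Longrightarrow> y * x \<in> pideal gam"
  unfolding M_mem by (metis mult.left_commute)

lemma one_notin: "(1::'a) \<notin> pideal gam"
proof
  assume "(1::'a) \<in> pideal gam"
  then have "\<forall>x. x \<in> pideal gam" using M_mult[of 1] by (metis mult.right_neutral)
  then have "pideal gam = UNIV" by blast
  moreover have "pideal gam \<noteq> UNIV" using crd unfolding chain_ring_data_def by blast
  ultimately show False by blast
qed

lemma gs: "gam ^ s = 0" using crd unfolding chain_ring_data_def by auto
lemma gt: "t < s \<Longrightarrow> gam ^ t \<noteq> 0" using crd unfolding chain_ring_data_def by auto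
lemma coset: "\<exists>!i. i < q \<and> x - e ! i \<in> pideal gam"
  using crd unfolding chain_ring_data_def by blast
lemma s_pos: "s \<ge> 1"
proof (rule ccontr)
  assume "\<not> s \<ge> 1" then have "s = 0" by simp
  then show False using gs crd unfolding chain_ring_data_def by auto
qed

lemma bezout:
  assumes u: "u \<notin> pideal gam"
  shows "\<exists>a b. 1 = gam * a + u * b"
proof -
  define J where "J = {gam * a + u * b | a b. True}"
  have id: "is_ideal J" unfolding is_ideal_def J_def
  proof (intro conjI ballI allI)
    show "0 \<in> {gam * a + u * b |a b. True}" by (rule CollectI, rule exI[of _ 0], rule exI[of _ 0]) simp
  next
    fix x y assume "x \<in> {gam * a + u * b |a b. True}" "y \<in> {gam * a + u * b |a b. True}"
    then obtain a b a' b' where "x = gam * a + u * b" "y = gam * a' + u * b'" by blast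
    then have "x + y = gam * (a + a') + u * (b + b')" by (simp add: algebra_simps)
    then show "x + y \<in> {gam * a + u * b |a b. True}" by blast
  next
    fix r x assume "x \<in> {gam * a + u * b |a b. True}"
    then obtain a b where "x = gam * a + u * b" by blast
    then have "r * x = gam * (r * a) + u * (r * b)" by (simp add: algebra_simps)
    then show "r * x \<in> {gam * a + u * b |a b. True}" by blast
  qed
  have sub: "pideal gam \<subseteq> J"
  proof
    fix x assume "x \<in> pideal gam"
    then obtain r where "x = gam * r" using M_mem by blast
    then have "x = gam * r + u * 0" by simp
    then show "x \<in> J" unfolding J_def by blast
  qed
  have "u \<in> J" unfolding J_def by (rule CollectI, rule exI[of _ 0], rule exI[of _ 1]) simp
  then have "J \<noteq> pideal gam" using u by blast
  then have "J = UNIV" using id sub crd unfolding chain_ring_data_def by blast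
  then have "1 \<in> J" by simp
  then show ?thesis unfolding J_def by blast
qed

lemma kill:
  assumes h: "gam ^ t = gam ^ Suc t * w"
  shows "gam ^ t = 0"
proof -
  have "gam ^ t = gam ^ (t + m) * w ^ m" for m
  proof (induction m)
    case 0 then show ?case by simp
  next
    case (Suc m)
    have "gam ^ (t + m) * w ^ m = gam ^ m * gam ^ t * w ^ m" by (simp add: power_add algebra_simps)
    also have "\<dots> = gam ^ m * (gam ^ Suc t * w) * w ^ m" using h by simp
    also have "\<dots> = gam ^ (t + Suc m) * w ^ Suc m" by (simp add: power_add algebra_simps)
    finally show ?case using Suc by simp
  qed
  from this[of s] show ?thesis using gs by (simp add: power_add)
qed

lemma val_unique:
  "length ds = n \<Longrightarrow> length ds' = n \<Longrightarrow> set ds \<subseteq> {..<q} \<Longrightarrow> set ds' \<subseteq> {..<q}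
   \<Longrightarrow> t + n \<le> s \<Longrightarrow> gam ^ t * val gam e ds = gam ^ t * val gam e ds' \<Longrightarrow> ds = ds'"
proof (induction ds arbitrary: ds' n t)
  case Nil then show ?case by simp
next
  case (Cons d ds)
  then obtain d' ds'' n' where ds': "ds' = d' # ds''" and n: "n = Suc n'"
    by (cases ds') auto
  have dq: "d < q" "d' < q" using Cons.prems ds' by auto
  have eq: "gam ^ t * (e ! d + gam * val gam e ds) = gam ^ t * (e ! d' + gam * val gam e ds'')"
    using Cons.prems ds' by simp
  have tl: "t < s" using Cons.prems n by simp
  have dd: "d = d'"
  proof (rule ccontr)
    assume ne: "d \<noteq> d'"
    define u where "u = e ! d - e ! d'"
    have "u \<notin> pideal gam"
    proof
      assume "u \<in> pideal gam"
      moreover have "e ! d - e ! d \<in> pideal gam" unfolding M_mem by (rule exI[of _ 0]) simp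
      ultimately show False using coset[of "e ! d"] dq ne unfolding u_def by blast
    qed
    then obtain a b where ab: "1 = gam * a + u * b" using bezout by blast
    define z where "z = val gam e ds'' - val gam e ds"
    have uz: "gam ^ t * u = gam ^ Suc t * z"
      using eq unfolding u_def z_def by (simp add: algebra_simps)
    have "gam ^ t = gam ^ t * (gam * a + u * b)" using ab by simp
    also have "\<dots> = gam ^ Suc t * a + (gam ^ t * u) * b" by (simp add: algebra_simps)
    also have "\<dots> = gam ^ Suc t * (a + z * b)" using uz by (simp add: algebra_simps)
    finally have "gam ^ t = 0" by (rule kill)
    then show False using gt tl by blast
  qed
  have "gam ^ Suc t * val gam e ds = gam ^ Suc t * val gam e ds''"
    using eq dd by (simp add: algebra_simps)
  then have "ds = ds''" using Cons.IH[of n' ds'' "Suc t"] Cons.prems ds' n by auto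
  then show ?case using dd ds' by simp
qed

lemma val_exists:
  "\<exists>ds r'. length ds = n \<and> set ds \<subseteq> {..<q} \<and> x = val gam e ds + gam ^ n * r'"
proof (induction n arbitrary: x)
  case 0
  show ?case by (rule exI[of _ "[]"], rule exI[of _ x]) simp
next
  case (Suc n)
  obtain d where d: "d < q" "x - e ! d \<in> pideal gam" using coset[of x] by blast
  then obtain y where y: "x - e ! d = gam * y" using M_mem by blast
  obtain ds r' where h: "length ds = n" "set ds \<subseteq> {..<q}" "y = val gam e ds + gam ^ n * r'"
    using Suc[of y] by blast
  have "x = val gam e (d # ds) + gam ^ Suc n * r'"
    using y h(3) by (simp add: algebra_simps)
  then show ?case using h d by (intro exI[of _ "d # ds"] exI[of _ r']) auto
qed

lemma digits_conv:
  "(length ds = s \<and> (\<forall>i<s. ds ! i < q) \<and> x = (\<Sum>i<s. e ! (ds ! i) * gam ^ i))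
     \<longleftrightarrow> (length ds = s \<and> set ds \<subseteq> {..<q} \<and> x = val gam e ds)"
proof (cases "length ds = s")
  case True
  have a: "(\<forall>i<s. ds ! i < q) \<longleftrightarrow> set ds \<subseteq> {..<q}"
    using set_lt_conv[of ds q] True by simp
  have b: "(\<Sum>i<s. e ! (ds ! i) * gam ^ i) = val gam e ds"
    using val_sum[of gam e ds] True by simp
  show ?thesis using a b True by simp
qed simp

lemma digits_ex1:
  "\<exists>!ds. length ds = s \<and> (\<forall>i<s. ds ! i < q) \<and> x = (\<Sum>i<s. e ! (ds ! i) * gam ^ i)"
proof -
  obtain ds r' where h: "length ds = s" "set ds \<subseteq> {..<q}" "x = val gam e ds + gam ^ s * r'"
    using val_exists by blast
  show ?thesis unfolding digits_conv
  proof (rule ex1I[of _ ds])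
    have "x = val gam e ds" using h(3) gs by simp
    then show "length ds = s \<and> set ds \<subseteq> {..<q} \<and> x = val gam e ds" using h(1,2) by blast
  next
    fix ds' assume a: "length ds' = s \<and> set ds' \<subseteq> {..<q} \<and> x = val gam e ds'"
    have "x = val gam e ds" using h(3) gs by simp
    then have "gam ^ 0 * val gam e ds' = gam ^ 0 * val gam e ds" using a by simp
    moreover have "0 + s \<le> s" by simp
    ultimately show "ds' = ds" using val_unique[of ds' s ds 0] h(1,2) a by blast
  qed
qed

lemma digits_props:
  "length (digits gam s q e x) = s \<and> set (digits gam s q e x) \<subseteq> {..<q}
   \<and> val gam e (digits gam s q e x) = x"
proof -
  have "length (digits gam s q e x) = s \<and> (\<forall>i<s. digits gam s q e x ! i < q)
     \<and> x = (\<Sum>i<s. e ! (digits gam s q e x ! i) * gam ^ i)"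
    unfolding digits_def by (rule theI'[OF digits_ex1])
  then show ?thesis unfolding digits_conv by metis
qed

lemma digits_inj:
  assumes h: "digits gam s q e x = digits gam s q e y" shows "x = y"
proof -
  have a: "val gam e (digits gam s q e x) = x" using digits_props[of x] by blast
  have b: "val gam e (digits gam s q e y) = y" using digits_props[of y] by blast
  show ?thesis using a b h by metis
qed

lemma cr_less_lex: "cr_less gam s q e x y = lexlt s (digits gam s q e x) (digits gam s q e y)"
  unfolding cr_less_def lexlt_def by simp

lemma cr_irr: "\<not> cr_less gam s q e x x" unfolding cr_less_lex by (rule lexlt_irrefl)

lemma cr_trans: "cr_less gam s q e x y \<Longrightarrow> cr_less gam s q e y z \<Longrightarrow> cr_less gam s q e x z"
  unfolding cr_less_lex by (rule lexlt_trans)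

lemma cr_tot:
  assumes "x \<noteq> y" shows "cr_less gam s q e x y \<or> cr_less gam s q e y x"
proof -
  have ne: "digits gam s q e x \<noteq> digits gam s q e y" using digits_inj assms by blast
  have lx: "length (digits gam s q e x) = s" using digits_props[of x] by blast
  have ly: "length (digits gam s q e y) = s" using digits_props[of y] by blast
  show ?thesis unfolding cr_less_lex using lexlt_total[OF lx ly ne] .
qed

lemma card_univ: "q ^ s \<le> card (UNIV::'a set)"
proof -
  let ?A = "{ds. set ds \<subseteq> {..<q} \<and> length ds = s}"
  have "inj_on (val gam e) ?A"
  proof (rule inj_onI)
    fix a b assume ab: "a \<in> ?A" "b \<in> ?A" "val gam e a = val gam e b"
    have "0 + s \<le> s" by simp
    moreover have "gam ^ 0 * val gam e a = gam ^ 0 * val gam e b" using ab by simp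
    ultimately show "a = b" using val_unique[of a s b 0] ab by blast
  qed
  then have "card ?A \<le> card (UNIV::'a set)" by (rule card_inj_on_le) auto
  then show ?thesis using card_lists_length_eq[of "{..<q}" s] by simp
qed

lemma card_M: "q ^ (s - 1) \<le> card (pideal gam)"
proof -
  let ?A = "{ds. set ds \<subseteq> {..<q} \<and> length ds = s - 1}"
  have "inj_on (\<lambda>ds. gam * val gam e ds) ?A"
  proof (rule inj_onI)
    fix a b assume ab: "a \<in> ?A" "b \<in> ?A" "gam * val gam e a = gam * val gam e b"
    have "1 + (s - 1) \<le> s" using s_pos by simp
    moreover have "gam ^ 1 * val gam e a = gam ^ 1 * val gam e b" using ab by simp
    ultimately show "a = b" using val_unique[of a "s - 1" b 1] ab by blast
  qed
  then have "card ?A \<le> card (pideal gam)" by (rule card_inj_on_le) (auto simp: M_mem)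
  then show ?thesis using card_lists_length_eq[of "{..<q}" "s - 1"] by simp
qed

lemma rho_rank:
  assumes j: "j < q ^ s"
  shows "card {x. cr_less gam s q e x (rho gam s q e j)} = j"
proof -
  have "\<exists>!r. r \<in> UNIV \<and> card {x \<in> UNIV. cr_less gam s q e x r} = j"
    by (rule rank_unique) (use cr_irr cr_trans cr_tot card_univ j in auto)
  then have "\<exists>!r. card {x. cr_less gam s q e x r} = j" by simp
  then show ?thesis unfolding rho_def by (rule theI')
qed

lemma rho_inj: "i < q ^ s \<Longrightarrow> j < q ^ s \<Longrightarrow> rho gam s q e i = rho gam s q e j \<Longrightarrow> i = j"
  using rho_rank by metis

lemma agam_props:
  assumes j: "j < q ^ (s - 1)"
  shows "agam gam s q e j \<in> pideal gam \<and> card {x \<in> pideal gam. cr_less gam s q e x (agam gam s q e j)} = j"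
proof -
  have "\<exists>!r. r \<in> pideal gam \<and> card {x \<in> pideal gam. cr_less gam s q e x r} = j"
    by (rule rank_unique) (use cr_irr cr_trans cr_tot card_M j in auto)
  then show ?thesis unfolding agam_def by (rule theI')
qed

lemma agam_inj: "i < q ^ (s - 1) \<Longrightarrow> j < q ^ (s - 1) \<Longrightarrow> agam gam s q e i = agam gam s q e j \<Longrightarrow> i = j"
  using agam_props by metis

lemma col_alpha_inj:
  "c < q ^ (s * k) \<Longrightarrow> c' < q ^ (s * k) \<Longrightarrow> col_alpha gam s q e k c = col_alpha gam s q e k c' \<Longrightarrow> c = c'"
proof (induction k arbitrary: c c')
  case 0 then show ?case by simp
next
  case (Suc k)
  define p where "p = q ^ (s * k)"
  have pq: "q ^ (s * Suc k) = q ^ s * p" unfolding p_def by (simp add: power_add)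
  have d: "c div p < q ^ s" "c' div p < q ^ s"
    using Suc.prems pq by (auto intro: less_mult_imp_div_less)
  have "q ^ s * p > 0" using Suc.prems(1) pq by linarith
  then have p0: "p > 0" by simp
  have eqs: "rho gam s q e (c div p) = rho gam s q e (c' div p)"
     "col_alpha gam s q e k (c mod p) = col_alpha gam s q e k (c' mod p)"
    using Suc.prems(3) unfolding p_def by simp_all
  have "c div p = c' div p" using rho_inj d eqs(1) by blast
  moreover have "c mod p = c' mod p" using Suc.IH[OF _ _ eqs(2)] p0 unfolding p_def by simp
  ultimately show ?case by (metis div_mult_mod_eq)
qed

lemma col_beta_struct:
  "c < n_beta q s (Suc k) \<Longrightarrow>
   \<exists>pre rest. col_beta gam s q e (Suc k) c = pre @ 1 # rest \<and> set pre \<subseteq> pideal gam"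
proof (induction k arbitrary: c)
  case 0 show ?case by (intro exI[of _ "[]"] exI[of _ "[]"]) simp
next
  case (Suc k)
  show ?case
  proof (cases "c < q ^ (s * Suc k)")
    case True
    then have "col_beta gam s q e (Suc (Suc k)) c = [] @ 1 # col_alpha gam s q e (Suc k) c" by simp
    then show ?thesis by (metis empty_set empty_subsetI)
  next
    case False
    define c' where "c' = c - q ^ (s * Suc k)"
    define n where "n = n_beta q s (Suc k)"
    have c'lt: "c' < q ^ (s - 1) * n" using Suc.prems False unfolding c'_def n_def by simp
    have n0: "n > 0" using c'lt by (cases "n = 0") auto
    have a: "agam gam s q e (c' div n) \<in> pideal gam"
      using agam_props less_mult_imp_div_less[OF c'lt] by blast
    obtain pre rest where pr: "col_beta gam s q e (Suc k) (c' mod n) = pre @ 1 # rest"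
        "set pre \<subseteq> pideal gam"
      using Suc.IH[of "c' mod n"] n0 unfolding n_def by auto
    have "col_beta gam s q e (Suc (Suc k)) c
        = agam gam s q e (c' div n) # col_beta gam s q e (Suc k) (c' mod n)"
      using False unfolding c'_def n_def by (simp add: Let_def)
    then show ?thesis using pr a
      by (intro exI[of _ "agam gam s q e (c' div n) # pre"] exI[of _ rest]) simp
  qed
qed

lemma col_beta_inj:
  "c < n_beta q s (Suc k) \<Longrightarrow> c2 < n_beta q s (Suc k) \<Longrightarrow>
   col_beta gam s q e (Suc k) c = col_beta gam s q e (Suc k) c2 \<Longrightarrow> c = c2"
proof (induction k arbitrary: c c2)
  case 0 then show ?case by simp
next
  case (Suc k)
  define P where "P = q ^ (s * Suc k)"
  define n where "n = n_beta q s (Suc k)"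
  have agM: "agam gam s q e (x div n) \<in> pideal gam" if "x < q ^ (s - 1) * n" for x
    using agam_props less_mult_imp_div_less[OF that] by blast
  show ?case
  proof (cases "c < P")
    case cT: True
    show ?thesis
    proof (cases "c2 < P")
      case True
      then have "col_alpha gam s q e (Suc k) c = col_alpha gam s q e (Suc k) c2"
        using cT Suc.prems(3) unfolding P_def by simp
      then show ?thesis using col_alpha_inj cT True unfolding P_def by blast
    next
      case False
      have lt: "c2 - P < q ^ (s - 1) * n" using Suc.prems(2) False unfolding P_def n_def by simp
      have "1 = agam gam s q e ((c2 - P) div n)"
        using cT False Suc.prems(3) unfolding P_def n_def by (simp add: Let_def)
      then show ?thesis using agM[OF lt] one_notin by simp
    qed
  next
    case cF: False
    have lt1: "c - P < q ^ (s - 1) * n" using Suc.prems(1) cF unfolding P_def n_def by simp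
    show ?thesis
    proof (cases "c2 < P")
      case True
      have "agam gam s q e ((c - P) div n) = 1"
        using cF True Suc.prems(3) unfolding P_def n_def by (simp add: Let_def)
      then show ?thesis using agM[OF lt1] one_notin by simp
    next
      case False
      have lt2: "c2 - P < q ^ (s - 1) * n" using Suc.prems(2) False unfolding P_def n_def by simp
      have n0: "n > 0" using lt1 by (cases "n = 0") auto
      have eqs: "agam gam s q e ((c - P) div n) = agam gam s q e ((c2 - P) div n)"
        "col_beta gam s q e (Suc k) ((c - P) mod n) = col_beta gam s q e (Suc k) ((c2 - P) mod n)"
        using cF False Suc.prems(3) unfolding P_def n_def by (simp_all add: Let_def)
      have "(c - P) div n = (c2 - P) div n"
        using agam_inj less_mult_imp_div_less[OF lt1] less_mult_imp_div_less[OF lt2] eqs(1) by blast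
      moreover have "(c - P) mod n = (c2 - P) mod n"
        using Suc.IH[OF _ _ eqs(2)] n0 unfolding n_def by simp
      ultimately have "c - P = c2 - P" by (metis div_mult_mod_eq)
      then show ?thesis using cF False by simp
    qed
  qed
qed

end


theorem proposition2p8:
  fixes gam lam :: "'a::{comm_ring_1,finite}" and s q k i j :: nat and e :: "'a list"
  assumes "chain_ring_data gam s q e"
    and "k \<ge> 1"
    and "i < n_beta q s k" and "j < n_beta q s k"
    and "col_beta gam s q e k i = map (\<lambda>x. lam * x) (col_beta gam s q e k j)"
  shows "lam = 1 \<and> i = j"
proof -
  note crd = assms(1)
  obtain k' where k: "k = Suc k'" using assms(2) by (cases k) auto
  obtain pi ri where pi: "col_beta gam s q e k i = pi @ 1 # ri" "set pi \<subseteq> pideal gam"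
    using col_beta_struct[OF crd] assms(3) k by blast
  obtain pj rj where pj: "col_beta gam s q e k j = pj @ 1 # rj" "set pj \<subseteq> pideal gam"
    using col_beta_struct[OF crd] assms(4) k by blast
  have h: "pi @ 1 # ri = map (\<lambda>x. lam * x) (pj @ 1 # rj)" using assms(5) pi pj by simp
  have len: "length (pi @ 1 # ri) = length (pj @ 1 # rj)" using h by simp
  have nth: "(pi @ 1 # ri) ! m = lam * (pj @ 1 # rj) ! m" if "m < length (pj @ 1 # rj)" for m
    unfolding h using nth_map[OF that, of "\<lambda>x. lam * x"] by simp
  have lam1: "lam = 1"
  proof (cases "length pi" "length pj" rule: linorder_cases)
    case less
    have "(1::'a) = lam * (pj @ 1 # rj) ! length pi" using nth[of "length pi"] less by simp
    also have "\<dots> = lam * pj ! length pi" using less by (simp add: nth_append)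
    finally have "(1::'a) \<in> pideal gam"
      using M_mult[OF crd] pj(2) less by (metis nth_mem subsetD)
    then show ?thesis using one_notin[OF crd] by blast
  next
    case equal
    have "(pi @ 1 # ri) ! length pi = lam * (pj @ 1 # rj) ! length pj"
      using nth[of "length pj"] equal by simp
    then show ?thesis by (simp add: nth_append)
  next
    case greater
    have "pi ! length pj = lam * (pj @ 1 # rj) ! length pj"
      using nth[of "length pj"] greater by (simp add: nth_append)
    then have "lam = pi ! length pj" by simp
    then have lM: "lam \<in> pideal gam" using pi(2) greater by (metis nth_mem subsetD)
    have li: "length pi < length (pj @ 1 # rj)" using len by simp
    have "(1::'a) = lam * (pj @ 1 # rj) ! length pi" using nth[OF li] by simp
    also have "\<dots> = (pj @ 1 # rj) ! length pi * lam" by (simp add: mult.commute)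
    finally have "(1::'a) \<in> pideal gam" using M_mult[OF crd lM] by metis
    then show ?thesis using one_notin[OF crd] by blast
  qed
  have "col_beta gam s q e (Suc k') i = col_beta gam s q e (Suc k') j"
    using assms(5) lam1 k by simp
  then have "i = j" using col_beta_inj[OF crd] assms(3,4) k by blast
  then show ?thesis using lam1 by simp
qed

end
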